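(* For all positive integers $r,s,k$ with $1\le r,s\le k$, $$\sum_{n\ge0}\big|\mathcal A_{2n+1}^{(k)}(r\to s)\big|\,x^{2n}=\begin{cases}(-1)^{r+s+1}\dfrac{xU_{2r-2}(x/2)U_{2k+1-2s}(x/2)}{U_{2k}(x/2)},&r<s,\\[2mm] 1-\dfrac{xU_{2r-2}(x/2)U_{2k+1-2r}(x/2)}{U_{2k}(x/2)},&r=s,\\[2mm] (-1)^{r+s+1}\dfrac{xU_{2s-2}(x/2)U_{2k+1-2r}(x/2)}{U_{2k}(x/2)},&r>s,\end{cases}$$ and $$\sum_{n\ge0}\big|\mathcal A_{2n+2}^{(k)}(r\to s)\big|\,x^{2n+1}=\begin{cases}(-1)^{r+s+1}\dfrac{xU_{2r-2}(x/2)U_{2k-2s}(x/2)}{U_{2k}(x/2)},&r\le s,\\[2mm] (-1)^{r+s+1}\dfrac{xU_{2s-1}(x/2)U_{2k-2r+1}(x/2)}{U_{2k}(x/2)},&r>s.\end{cases}$$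
   Context: For positive integers $n,k$ and $1\le r,s\le k$, $\mathcal A_n^{(k)}(r\to s)$ is the set of integer sequences $(a_1,\dots,a_n)$ with $a_1=r$, $a_n=s$, $1\le a_i\le k$ for all $i$, which are alternating in the sense $a_1\le a_2\ge a_3\le a_4\ge\cdots$, i.e. $a_{2j-1}\le a_{2j}$ and $a_{2j}\ge a_{2j+1}$ whenever the indices are in range. $U_n(x)$ is the $n$-th Chebyshev polynomial of the second kind ($U_0=1$, $U_1(x)=2x$, $U_{n+1}(x)=2xU_n(x)-U_{n-1}(x)$). *)

theory Defs
  imports "HOL-Computational_Algebra.Computational_Algebra"
begin

fun cheb_U :: "nat \<Rightarrow> real poly" where
  "cheb_U 0 = 1"
| "cheb_U (Suc 0) = [:0, 2:]"
| "cheb_U (Suc (Suc n)) = [:0, 2:] * cheb_U (Suc n) - cheb_U n"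

definition U_half :: "nat \<Rightarrow> real fps" where
  "U_half n = fps_of_poly (pcompose (cheb_U n) [:0, 1/2:])"

text \<open>A_n^(k)(r -> s) with sequences stored as lists, 0-indexed:
  list index i corresponds to a_(i+1); a_1 <= a_2 >= a_3 <= ... means
  a!i <= a!(i+1) for even i and a!i >= a!(i+1) for odd i.\<close>
definition alt_seqs :: "nat \<Rightarrow> nat \<Rightarrow> nat \<Rightarrow> nat \<Rightarrow> nat list set" where
  "alt_seqs n k r s = {a. length a = n \<and> n \<ge> 1 \<and> a ! 0 = r \<and> a ! (n - 1) = s
      \<and> (\<forall>i<n. 1 \<le> a ! i \<and> a ! i \<le> k)
      \<and> (\<forall>i. i + 1 < n \<longrightarrow>
            (if even i then a ! i \<le> a ! (i + 1) else a ! i \<ge> a ! (i + 1)))}"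

end

theory Submission
  imports Defs
begin

fun W :: "nat \<Rightarrow> real fps" where
  "W 0 = 0"
| "W (Suc n) = U_half n"

lemma U_half_0[simp]: "U_half 0 = 1"
  by (simp add: U_half_def pcompose_1)

lemma U_half_1: "U_half (Suc 0) = fps_X"
proof -
  have "pcompose [:0, 2:] [:0, 1/2::real:] = [:0, 1:]"
    by (simp add: pcompose_pCons)
  then show ?thesis by (simp add: U_half_def)
qed

lemma U_half_rec: "U_half (Suc (Suc n)) = fps_X * U_half (Suc n) - U_half n"
proof -
  have "pcompose [:0, 2:] [:0, 1/2::real:] = [:0, 1:]"
    by (simp add: pcompose_pCons)
  then show ?thesis
    unfolding U_half_def cheb_U.simps(3) pcompose_diff pcompose_mult fps_of_poly_mult fps_of_poly_diff
    by simp
qed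

lemma W_rec: "W (Suc (Suc n)) = fps_X * W (Suc n) - W n"
  by (cases n) (simp_all add: U_half_1 U_half_0 U_half_rec)

lemma W_1[simp]: "W (Suc 0) = 1" by (simp add: U_half_0)

lemma W_const: "W (2*n+1) $ 0 = (-1)^n \<and> W (2*n) $ 0 = 0"
proof (induction n)
  case 0 then show ?case by simp
next
  case (Suc n)
  have c1: "W (Suc (Suc (2*n))) $ 0 = - (W (2*n) $ 0)"
    by (subst W_rec) simp
  have c2: "W (Suc (Suc (Suc (2*n)))) $ 0 = - (W (Suc (2*n)) $ 0)"
    by (subst W_rec) simp
  have e1: "2 * Suc n = Suc (Suc (2*n))" "2 * Suc n + 1 = Suc (Suc (Suc (2*n)))" by simp_all
  show ?case unfolding e1 using Suc c1 c2 by (simp del: W.simps)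
qed

lemma W_cassini: "W (Suc a) * W (Suc b) - W a * W b = W (a + b + 1)"
proof (induction a arbitrary: b)
  case 0 then show ?case by simp
next
  case (Suc a)
  have "W (Suc (Suc a)) * W (Suc b) - W (Suc a) * W b
       = (fps_X * W (Suc a) - W a) * W (Suc b) - W (Suc a) * W b"
    by (simp only: W_rec)
  also have "\<dots> = W (Suc a) * (fps_X * W (Suc b) - W b) - W a * W (Suc b)"
    by (simp add: algebra_simps)
  also have "\<dots> = W (Suc a) * W (Suc (Suc b)) - W a * W (Suc b)"
    by (simp only: W_rec)
  also have "\<dots> = W (a + Suc b + 1)" using Suc.IH[of "Suc b"] by simp
  finally show ?case by simp
qed

lemma alt_empty: "n \<ge> 1 \<Longrightarrow> t < 1 \<or> t > k \<Longrightarrow> alt_seqs n k r t = {}"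
proof (rule equals0I)
  fix a assume n: "n \<ge> 1" and tt: "t < 1 \<or> t > k" and a: "a \<in> alt_seqs n k r t"
  have e: "a ! (n - 1) = t" and rng: "\<forall>i<n. 1 \<le> a ! i \<and> a ! i \<le> k"
    using a unfolding alt_seqs_def by blast+
  have "1 \<le> a ! (n - 1) \<and> a ! (n - 1) \<le> k" using rng n by simp
  then show False using e tt by simp
qed

lemma alt_one: "1 \<le> r \<Longrightarrow> r \<le> k \<Longrightarrow> alt_seqs 1 k r t = (if t = r then {[r]} else {})"
  unfolding alt_seqs_def
  by (auto simp: length_Suc_conv)

lemma alt_finite: "finite (alt_seqs n k r t)"
proof (rule finite_subset)
  show "alt_seqs n k r t \<subseteq> {xs. set xs \<subseteq> {0..k} \<and> length xs = n}"
    unfolding alt_seqs_def by (auto simp: in_set_conv_nth)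
  show "finite {xs. set xs \<subseteq> {0..k::nat} \<and> length xs = n}"
    by (rule finite_lists_length_eq) simp
qed

definition Sset :: "nat \<Rightarrow> nat \<Rightarrow> nat \<Rightarrow> nat set" where
  "Sset n k t = (if even (n - 1) then {..t} else {t..k})"

lemma alt_step:
  assumes n: "n \<ge> 1" and t: "1 \<le> t" "t \<le> k"
  shows "alt_seqs (Suc n) k r t = (\<lambda>a. a @ [t]) ` (\<Union>s \<in> Sset n k t. alt_seqs n k r s)"
proof (intro equalityI subsetI)
  fix a assume a: "a \<in> alt_seqs (Suc n) k r t"
  have len: "length a = Suc n" and a0: "a ! 0 = r" and an: "a ! n = t"
    and rng: "\<forall>i<Suc n. 1 \<le> a ! i \<and> a ! i \<le> k"
    and alt: "\<forall>i. i + 1 < Suc n \<longrightarrow> (if even i then a ! i \<le> a ! (i + 1) else a ! i \<ge> a ! (i + 1))"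
    using a unfolding alt_seqs_def by auto
  define b where "b = take n a"
  have ab: "a = b @ [t]"
    using len an unfolding b_def
    by (metis Suc_leI le_refl take_Suc_conv_app_nth take_all lessI)
  have lb: "length b = n" using len b_def by simp
  have bn: "\<And>i. i < n \<Longrightarrow> b ! i = a ! i" unfolding b_def by simp
  have altb: "\<forall>i. i + 1 < n \<longrightarrow> (if even i then b ! i \<le> b ! (i + 1) else b ! i \<ge> b ! (i + 1))"
  proof (intro allI impI)
    fix i assume i: "i + 1 < n"
    then have "b ! i = a ! i" "b ! (i+1) = a ! (i+1)" using bn by auto
    then show "if even i then b ! i \<le> b ! (i + 1) else b ! i \<ge> b ! (i + 1)"
      using alt[rule_format, of i] i by (cases "even i") auto
  qed
  have "b \<in> alt_seqs n k r (a ! (n - 1))"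
    unfolding alt_seqs_def using n lb bn a0 rng altb
    by (auto simp: bn)
  moreover have "a ! (n - 1) \<in> Sset n k t"
    using alt[rule_format, of "n - 1"] n an rng unfolding Sset_def
    by (auto split: if_splits)
  ultimately show "a \<in> (\<lambda>a. a @ [t]) ` (\<Union>s \<in> Sset n k t. alt_seqs n k r s)"
    using ab by blast
next
  fix a assume "a \<in> (\<lambda>a. a @ [t]) ` (\<Union>s \<in> Sset n k t. alt_seqs n k r s)"
  then obtain b s where ab: "a = b @ [t]" and s: "s \<in> Sset n k t" and b: "b \<in> alt_seqs n k r s"
    by blast
  have lb: "length b = n" and b0: "b ! 0 = r" and bn: "b ! (n - 1) = s"
    and rng: "\<forall>i<n. 1 \<le> b ! i \<and> b ! i \<le> k"
    and alt: "\<forall>i. i + 1 < n \<longrightarrow> (if even i then b ! i \<le> b ! (i + 1) else b ! i \<ge> b ! (i + 1))"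
    using b unfolding alt_seqs_def by auto
  have "a ! 0 = r" using ab b0 n lb by (simp add: nth_append)
  moreover have "a ! n = t" using ab lb by (simp add: nth_append)
  moreover have "\<forall>i<Suc n. 1 \<le> a ! i \<and> a ! i \<le> k"
    using rng t ab lb by (auto simp: nth_append less_Suc_eq)
  moreover have "\<forall>i. i + 1 < Suc n \<longrightarrow> (if even i then a ! i \<le> a ! (i + 1) else a ! i \<ge> a ! (i + 1))"
  proof (intro allI impI)
    fix i assume i: "i + 1 < Suc n"
    show "if even i then a ! i \<le> a ! (i + 1) else a ! i \<ge> a ! (i + 1)"
    proof (cases "i + 1 < n")
      case True
      then show ?thesis using alt ab lb by (auto simp: nth_append)
    next
      case False
      then have "i = n - 1" using i by simp
      then show ?thesis using s bn ab lb n unfolding Sset_def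
        by (auto simp: nth_append split: if_splits)
    qed
  qed
  moreover have "length a = Suc n" using ab lb by simp
  ultimately show "a \<in> alt_seqs (Suc n) k r t"
    unfolding alt_seqs_def by simp
qed

lemma card_step:
  assumes n: "n \<ge> 1" and t: "1 \<le> t" "t \<le> k"
  shows "card (alt_seqs (Suc n) k r t) = (\<Sum>s \<in> Sset n k t. card (alt_seqs n k r s))"
proof -
  have fin: "finite (Sset n k t)" unfolding Sset_def by simp
  have "card (alt_seqs (Suc n) k r t) = card (\<Union>s \<in> Sset n k t. alt_seqs n k r s)"
    unfolding alt_step[OF assms] by (rule card_image) (simp add: inj_on_def)
  also have "\<dots> = (\<Sum>s \<in> Sset n k t. card (alt_seqs n k r s))"
  proof (rule card_UN_disjoint[OF fin])
    show "\<forall>i\<in>Sset n k t. finite (alt_seqs n k r i)" by (simp add: alt_finite)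
    show "\<forall>i\<in>Sset n k t. \<forall>j\<in>Sset n k t. i \<noteq> j \<longrightarrow> alt_seqs n k r i \<inter> alt_seqs n k r j = {}"
      unfolding alt_seqs_def by auto
  qed
  finally show ?thesis .
qed

definition cnt :: "nat \<Rightarrow> nat \<Rightarrow> nat \<Rightarrow> nat \<Rightarrow> real" where
  "cnt k r n t = real (card (alt_seqs n k r t))"

definition cc :: "nat \<Rightarrow> nat \<Rightarrow> nat \<Rightarrow> real fps" where
  "cc k r j = Abs_fps (\<lambda>m. if (even m \<longleftrightarrow> odd j) then cnt k r (m+1) ((j+1) div 2) else 0)"

lemma cc_nth: "cc k r j $ m = (if (even m \<longleftrightarrow> odd j) then cnt k r (m+1) ((j+1) div 2) else 0)"
  by (simp add: cc_def)

lemma cnt_empty: "n \<ge> 1 \<Longrightarrow> t < 1 \<or> t > k \<Longrightarrow> cnt k r n t = 0"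
  by (simp add: cnt_def alt_empty)

lemma cnt_step: "n \<ge> 1 \<Longrightarrow> 1 \<le> t \<Longrightarrow> t \<le> k \<Longrightarrow>
   cnt k r (Suc n) t = (\<Sum>s \<in> Sset n k t. cnt k r n s)"
  by (simp add: cnt_def card_step)

lemma D1:
  assumes "odd n" "1 \<le> t" "t \<le> k"
  shows "cnt k r (Suc n) t = cnt k r (Suc n) (t - 1) + cnt k r n t"
proof -
  have n: "n \<ge> 1" using assms(1) by (cases n) auto
  have S: "\<And>t. Sset n k t = {..t}" using assms(1) by (simp add: Sset_def)
  obtain u where u: "t = Suc u" using assms(2) by (cases t) auto
  have a: "cnt k r (Suc n) t = (\<Sum>s \<le> u. cnt k r n s) + cnt k r n t"
    using cnt_step[OF n assms(2,3)] S u by simp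
  have b: "cnt k r (Suc n) u = (\<Sum>s \<le> u. cnt k r n s)"
  proof (cases u)
    case 0 then show ?thesis using cnt_empty[of "Suc n" 0] cnt_empty[OF n, of 0] by simp
  next
    case (Suc v) then show ?thesis using cnt_step[OF n, of u] S u assms by simp
  qed
  show ?thesis using a b u by simp
qed

lemma D2:
  assumes "even n" "n \<ge> 2" "1 \<le> t" "t \<le> k"
  shows "cnt k r (Suc n) t = cnt k r (Suc n) (t + 1) + cnt k r n t"
proof -
  have n: "n \<ge> 1" using assms(2) by simp
  have S: "\<And>t. Sset n k t = {t..k}" using assms(1,2) by (simp add: Sset_def)
  have a: "cnt k r (Suc n) t = cnt k r n t + (\<Sum>s \<in> {Suc t..k}. cnt k r n s)"
    using cnt_step[OF n assms(3,4)] S assms(4) by (simp add: sum.atLeast_Suc_atMost)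
  have b: "cnt k r (Suc n) (t+1) = (\<Sum>s \<in> {Suc t..k}. cnt k r n s)"
  proof (cases "t + 1 \<le> k")
    case True then show ?thesis using cnt_step[OF n, of "t+1"] S by simp
  next
    case False then show ?thesis using cnt_empty[of "Suc n" "t+1" k r] by simp
  qed
  show ?thesis using a b by simp
qed

lemma D3: "1 \<le> r \<Longrightarrow> r \<le> k \<Longrightarrow> cnt k r 1 t = (if t = r then 1 else 0)"
  using alt_one[of r k t] by (simp add: cnt_def)

lemma R1:
  assumes "odd j" "j < 2*k"
  shows "cc k r (j+1) = cc k r (j-1) + fps_X * cc k r j"
proof -
  obtain u where j: "j = 2*u+1" using assms(1) oddE by blast
  have uk: "u + 1 \<le> k" using assms j by simp
  show ?thesis
  proof (rule fps_ext)
    fix m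
    show "cc k r (j+1) $ m = (cc k r (j-1) + fps_X * cc k r j) $ m"
    proof (cases m)
      case 0 then show ?thesis by (simp add: cc_nth j)
    next
      case (Suc m')
      show ?thesis
      proof (cases "even m")
        case True then show ?thesis using Suc by (simp add: cc_nth j)
      next
        case False
        have "cnt k r (Suc m) (u+1) = cnt k r (Suc m) u + cnt k r m (u+1)"
          using D1[OF False, of "u+1" k r] uk by simp
        then show ?thesis using False Suc by (simp add: cc_nth j)
      qed
    qed
  qed
qed

lemma R2:
  assumes "even j" "2 \<le> j" "j \<le> 2*k" "1 \<le> r" "r \<le> k"
  shows "cc k r (j+1) = cc k r (j-1) - fps_X * cc k r j
          - ((if j div 2 = r then 1 else 0) - (if j div 2 + 1 = r then 1 else 0))"
proof -
  obtain t where j: "j = 2*t" using assms(1) by blast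
  have t: "1 \<le> t" "t \<le> k" using assms j by auto
  have jm: "j - 1 = 2*(t-1) + 1" using t j by simp
  show ?thesis
  proof (rule fps_ext)
    fix m
    show "cc k r (j+1) $ m = (cc k r (j-1) - fps_X * cc k r j
          - ((if j div 2 = r then 1 else 0) - (if j div 2 + 1 = r then 1 else 0))) $ m"
    proof (cases m)
      case 0
      then show ?thesis using t D3[OF assms(4,5)] by (simp add: cc_nth j jm)
    next
      case (Suc m')
      show ?thesis
      proof (cases "even m")
        case False then show ?thesis using Suc t by (simp add: cc_nth j jm)
      next
        case True
        have "cnt k r (Suc m) t = cnt k r (Suc m) (t + 1) + cnt k r m t"
          using D2[OF True _ t] Suc True by (cases m') auto
        then show ?thesis using True Suc t by (simp add: cc_nth j jm)
      qed
    qed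
  qed
qed

definition dd :: "nat \<Rightarrow> nat \<Rightarrow> nat \<Rightarrow> real fps" where
  "dd k r j = (-1) ^ ((j+1) div 2) * cc k r j"

definition sig :: "nat \<Rightarrow> nat \<Rightarrow> real fps" where
  "sig r i = (if i = 2*r-1 \<or> i = 2*r+1 then (-1)^(r+1) else 0)"

lemma RR:
  assumes "1 \<le> r" "r \<le> k" "1 \<le> j" "j \<le> 2*k"
  shows "dd k r (j+1) = fps_X * dd k r j - dd k r (j-1) - sig r (j+1)"
proof (cases "odd j")
  case True
  obtain u where j: "j = 2*u+1" using True oddE by blast
  have "j < 2*k" using True assms(4) j by presburger
  note R = R1[OF True this, of r]
  have "\<not> (2*u+1+1 = 2*r-1 \<or> 2*u+1+1 = 2*r+1)" using assms(1) by presburger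
  then have s: "sig r (j+1) = 0" unfolding sig_def j by simp
  have e1: "(j+1+1) div 2 = u+1" "(j+1) div 2 = u+1" "(j-1+1) div 2 = u" using j by simp_all
  show ?thesis unfolding dd_def e1 s R by (simp add: algebra_simps)
next
  case False
  obtain t where j: "j = 2*t" using False by blast
  obtain v where v: "t = Suc v" using assms(3) j by (cases t) auto
  note R = R2[OF _ _ assms(4,1,2)] 
  have R': "cc k r (j+1) = cc k r (j-1) - fps_X * cc k r j
          - ((if t = r then 1 else 0) - (if t + 1 = r then 1 else 0))"
    using R False assms(3) j by simp
  have e1: "(j+1+1) div 2 = t+1" "(j+1) div 2 = t" "(j-1+1) div 2 = t" using j v by simp_all
  have s: "sig r (j+1) = (-1)^(t+1) * ((if t = r then 1 else 0) - (if t + 1 = r then 1 else 0))"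
  proof -
    consider "t = r" | "t + 1 = r" | "t \<noteq> r \<and> t + 1 \<noteq> r" by blast
    then show ?thesis
    proof cases
      case 1 then show ?thesis unfolding sig_def j by simp
    next
      case 2 then show ?thesis unfolding sig_def j by auto
    next
      case 3 then show ?thesis unfolding sig_def j by auto
    qed
  qed
  show ?thesis unfolding dd_def e1 s R' by (simp add: algebra_simps)
qed

definition PP :: "nat \<Rightarrow> nat \<Rightarrow> nat \<Rightarrow> real fps" where
  "PP k r j = (if j \<le> 2*r-1 then W j * W (2*k+1-(2*r-1)) else W (2*r-1) * W (2*k+1-j))"

definition GG :: "nat \<Rightarrow> nat \<Rightarrow> real fps" where
  "GG k r = (-1)^(r+1) * fps_X * inverse (W (2*k+1))"

definition Dc :: "nat \<Rightarrow> nat \<Rightarrow> nat \<Rightarrow> real fps" where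
  "Dc k r j = GG k r * PP k r j - (if j = 2*r-1 then (-1)^(r+1) else 0)"

lemma W_nz0: "W (2*k+1) $ 0 \<noteq> 0"
  using W_const[of k] by simp

lemma GG_D: "GG k r * W (2*k+1) = (-1)^(r+1) * fps_X"
proof -
  have "inverse (W (2*k+1)) * W (2*k+1) = 1" using W_nz0[of k] by (rule inverse_mult_eq_1)
  then show ?thesis unfolding GG_def by (simp add: mult.assoc)
qed

lemma Dc_0: "1 \<le> r \<Longrightarrow> Dc k r 0 = 0"
  by (simp add: Dc_def PP_def)

lemma Dc_end: "r \<le> k \<Longrightarrow> Dc k r (2*k+1) = 0"
  by (simp add: Dc_def PP_def)

lemma Dc_rec:
  assumes "1 \<le> r" "r \<le> k" "1 \<le> j" "j \<le> 2*k"
  shows "Dc k r (j+1) = fps_X * Dc k r j - Dc k r (j-1) - sig r (j+1)"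
proof -
  define m where "m = 2*r-1"
  define \<rho> where "\<rho> = ((-1)^(r+1) :: real fps)"
  define G where "G = GG k r"
  have sg: "sig r i = (if i = m \<or> i = m+2 then \<rho> else 0)" for i
    unfolding sig_def m_def \<rho>_def using assms(1) by (auto)
  have Dc: "Dc k r i = G * PP k r i - (if i = m then \<rho> else 0)" for i
    unfolding Dc_def m_def \<rho>_def G_def by simp
  have P: "PP k r i = (if i \<le> m then W i * W (2*k+1-m) else W m * W (2*k+1-i))" for i
    unfolding PP_def m_def by simp
  have GD: "G * W (2*k+1) = \<rho> * fps_X" unfolding G_def \<rho>_def by (rule GG_D)
  have mk: "m < 2*k" "odd m" "m \<ge> 1" unfolding m_def using assms by auto
  consider "j + 1 \<le> m" | "j = m" | "j = m + 1" | "j \<ge> m + 2" by linarith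
  then show ?thesis
  proof cases
    case 1
    obtain j' where j': "j = Suc j'" using assms(3) by (cases j) auto
    have w: "W (Suc (Suc j')) = fps_X * W (Suc j') - W j'" by (rule W_rec)
    have ne: "j \<noteq> m" "j - 1 \<noteq> m" "j + 1 \<noteq> m + 2" using 1 by auto
    show ?thesis unfolding Dc P sg using 1 ne
      by (simp add: j' w algebra_simps del: W.simps)
  next
    case 2
    have c: "W (Suc m) * W (Suc (2*k-m)) - W m * W (2*k-m) = W (2*k+1)"
      using W_cassini[of m "2*k-m"] mk by simp
    have w: "W (Suc m) = fps_X * W m - W (m - 1)"
      using W_rec[of "m-1"] mk by (simp add: Suc_diff_1)
    have ne: "j + 1 \<noteq> m" "j + 1 \<noteq> m + 2" "j - 1 \<noteq> m" "\<not> (j + 1 \<le> m)" "j - 1 \<le> m"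
      using 2 mk by auto
    have e: "2*k+1-m = Suc (2*k-m)" "2*k+1-(m+1) = 2*k-m" using mk by auto
    have "G * (W m * W (2*k-m)) = fps_X * (G * (W m * W (Suc (2*k-m))) - \<rho>) - G * (W (m-1) * W (Suc (2*k-m)))"
    proof -
      have "G * (W m * W (2*k-m)) = G * (W (Suc m) * W (Suc (2*k-m))) - G * W (2*k+1)"
        using c by (simp add: algebra_simps)
      also have "\<dots> = G * (W (Suc m) * W (Suc (2*k-m))) - \<rho> * fps_X" using GD by simp
      finally show ?thesis unfolding w by (simp add: algebra_simps)
    qed
    then show ?thesis unfolding Dc P sg using 2 ne e by simp
  next
    case 3
    define n where "n = 2*k-1-m"
    have ee: "2*k+1-(j+1) = n" "2*k+1-j = Suc n" "2*k+1-m = Suc (Suc n)"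
      using 3 mk unfolding n_def by auto
    have ne: "j + 1 \<noteq> m" "j \<noteq> m" "j - 1 = m" "\<not> j + 1 \<le> m" "\<not> j \<le> m" "j+1 = m+2"
      using 3 mk by auto
    have "Dc k r (j+1) = G * (W m * W n)" unfolding Dc P using ne ee by simp
    moreover have "Dc k r j = G * (W m * W (Suc n))" unfolding Dc P using ne ee by simp
    moreover have "Dc k r (j-1) = G * (W m * W (Suc (Suc n))) - \<rho>" unfolding Dc P using ne ee by simp
    moreover have "sig r (j+1) = \<rho>" unfolding sg using ne by simp
    ultimately show ?thesis by (simp add: W_rec algebra_simps del: W.simps)
  next
    case 4
    define n where "n = 2*k-j"
    have ee: "2*k+1-(j+1) = n" "2*k+1-j = Suc n" "2*k+1-(j-1) = Suc (Suc n)"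
      using 4 assms unfolding n_def by auto
    have ne: "j + 1 \<noteq> m" "j \<noteq> m" "j - 1 \<noteq> m" "\<not> j + 1 \<le> m" "\<not> j \<le> m" "\<not> j - 1 \<le> m"
       "j+1 \<noteq> m+2" using 4 by auto
    have "Dc k r (j+1) = G * (W m * W n)" unfolding Dc P using ne ee by simp
    moreover have "Dc k r j = G * (W m * W (Suc n))" unfolding Dc P using ne ee by simp
    moreover have "Dc k r (j-1) = G * (W m * W (Suc (Suc n)))" unfolding Dc P using ne ee by simp
    moreover have "sig r (j+1) = 0" unfolding sg using ne by simp
    ultimately show ?thesis by (simp add: W_rec algebra_simps del: W.simps)
  qed
qed

lemma uniq:
  fixes e :: "nat \<Rightarrow> real fps"
  assumes rec: "\<And>j. 1 \<le> j \<Longrightarrow> j \<le> 2*k \<Longrightarrow> e (j+1) = fps_X * e j - e (j-1)"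
    and e0: "e 0 = 0" and eN: "e (2*k+1) = 0"
  shows "j \<le> 2*k+1 \<Longrightarrow> e j = 0"
proof -
  have main: "j + 1 \<le> 2*k+1 \<longrightarrow> e j = e 1 * W j \<and> e (j+1) = e 1 * W (j+1)" for j
  proof (induction j)
    case 0 then show ?case using e0 by simp
  next
    case (Suc j)
    show ?case
    proof
      assume a: "Suc j + 1 \<le> 2*k+1"
      then have ih: "e j = e 1 * W j" "e (j+1) = e 1 * W (j+1)" using Suc by auto
      have "e (Suc j + 1) = fps_X * e (Suc j) - e j" using rec[of "Suc j"] a by simp
      also have "\<dots> = e 1 * (fps_X * W (Suc j) - W j)" using ih by (simp add: algebra_simps)
      also have "\<dots> = e 1 * W (Suc j + 1)" using W_rec[of j] by simp
      finally show "e (Suc j) = e 1 * W (Suc j) \<and> e (Suc j + 1) = e 1 * W (Suc j + 1)"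
        using ih by simp
    qed
  qed
  have "e (2*k+1) = e 1 * W (2*k+1)" using main[of "2*k"] by simp
  moreover have "W (2*k+1) \<noteq> 0" using W_nz0[of k] by auto
  ultimately have "e 1 = 0" using eN by simp
  then show "j \<le> 2*k+1 \<Longrightarrow> e j = 0" using main[of j] main[of "j-1"]
    by (cases j) auto
qed

lemma dd_eq:
  assumes "1 \<le> r" "r \<le> k" "j \<le> 2*k+1"
  shows "dd k r j = Dc k r j"
proof -
  define e where "e j = dd k r j - Dc k r j" for j
  have "e j = 0"
  proof (rule uniq[of k e])
    show "e (j+1) = fps_X * e j - e (j-1)" if "1 \<le> j" "j \<le> 2*k" for j
      unfolding e_def RR[OF assms(1,2) that] Dc_rec[OF assms(1,2) that]
      by (simp add: algebra_simps)
    have c0: "cc k r 0 = 0" by (rule fps_ext) (simp add: cc_nth cnt_empty)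
    have c1: "cc k r (2*k+1) = 0" by (rule fps_ext) (simp add: cc_nth cnt_empty)
    show "e 0 = 0" unfolding e_def dd_def c0 Dc_0[OF assms(1)] by simp
    show "e (2*k+1) = 0" unfolding e_def dd_def c1 Dc_end[OF assms(2)] by simp
    show "j \<le> 2*k+1" by fact
  qed
  then show ?thesis unfolding e_def by simp
qed

lemma cc_eq:
  assumes "1 \<le> r" "r \<le> k" "j \<le> 2*k+1"
  shows "cc k r j = (-1)^((j+1) div 2) * Dc k r j"
proof -
  have "(-1)^((j+1) div 2) * dd k r j = cc k r j"
    unfolding dd_def by (simp add: mult.assoc[symmetric] power_mult_distrib[symmetric])
  then show ?thesis using dd_eq[OF assms] by simp
qed

lemma W_pos: "n \<ge> 1 \<Longrightarrow> W n = U_half (n-1)"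
  by (cases n) auto

theorem theorem4:
  fixes k r s :: nat
  assumes "1 \<le> r" "r \<le> k" "1 \<le> s" "s \<le> k"
  shows "Abs_fps (\<lambda>m. if even m then real (card (alt_seqs (m + 1) k r s)) else 0) =
           (if r < s then
              (-1) ^ (r + s + 1) * (fps_X * U_half (2*r - 2) * U_half (2*k + 1 - 2*s) / U_half (2*k))
            else if r = s then
              1 - fps_X * U_half (2*r - 2) * U_half (2*k + 1 - 2*r) / U_half (2*k)
            else
              (-1) ^ (r + s + 1) * (fps_X * U_half (2*s - 2) * U_half (2*k + 1 - 2*r) / U_half (2*k)))
       \<and> Abs_fps (\<lambda>m. if odd m then real (card (alt_seqs (m + 1) k r s)) else 0) =
           (if r \<le> s then
              (-1) ^ (r + s + 1) * (fps_X * U_half (2*r - 2) * U_half (2*k - 2*s) / U_half (2*k))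
            else
              (-1) ^ (r + s + 1) * (fps_X * U_half (2*s - 1) * U_half (2*k - 2*r + 1) / U_half (2*k)))"
proof -
  define I where "I = inverse (U_half (2*k))"
  have D0: "U_half (2*k) $ 0 \<noteq> 0" using W_nz0[of k] by simp
  have div: "f / U_half (2*k) = f * I" for f
    unfolding I_def using D0 by (rule fps_divide_unit)
  have G: "GG k r = (-1)^(r+1) * fps_X * I" unfolding GG_def I_def by simp
  have L1: "Abs_fps (\<lambda>m. if even m then real (card (alt_seqs (m + 1) k r s)) else 0) = cc k r (2*s-1)"
  proof -
    have h: "(2 * s - 1 + 1) div 2 = s" "odd (2*s-1)" using assms(3) by simp_all
    show ?thesis unfolding cc_def cnt_def h(1) using h(2) by simp
  qed
  have L2: "Abs_fps (\<lambda>m. if odd m then real (card (alt_seqs (m + 1) k r s)) else 0) = cc k r (2*s)"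
  proof -
    have h: "(2 * s + 1) div 2 = s" by simp
    show ?thesis unfolding cc_def cnt_def h by simp
  qed
  have C1: "cc k r (2*s-1) = (-1)^s * Dc k r (2*s-1)"
    using cc_eq[OF assms(1,2), of "2*s-1"] assms by simp
  have C2: "cc k r (2*s) = (-1)^s * Dc k r (2*s)"
    using cc_eq[OF assms(1,2), of "2*s"] assms by simp
  have sgn: "((-1)::real fps)^s * (-1)^(r+1) = (-1)^(r+s+1)" by (simp add: power_add)
  have part1: "cc k r (2*s-1) =
           (if r < s then
              (-1) ^ (r + s + 1) * (fps_X * U_half (2*r - 2) * U_half (2*k + 1 - 2*s) / U_half (2*k))
            else if r = s then
              1 - fps_X * U_half (2*r - 2) * U_half (2*k + 1 - 2*r) / U_half (2*k)
            else
              (-1) ^ (r + s + 1) * (fps_X * U_half (2*s - 2) * U_half (2*k + 1 - 2*r) / U_half (2*k)))"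
  proof -
    consider "r < s" | "r = s" | "r > s" by linarith
    then show ?thesis
    proof cases
      case 1
      have c: "\<not> (2*s-1 \<le> 2*r-1)" using 1 by simp
      have i: "2*r-1 = Suc (2*r-2)" "2*k+1-(2*s-1) = Suc (2*k+1-2*s)" using 1 assms by auto
      have "PP k r (2*s-1) = W (2*r-1) * W (2*k+1-(2*s-1))" unfolding PP_def using c by simp
      also have "\<dots> = U_half (2*r-2) * U_half (2*k+1-2*s)" unfolding i by simp
      finally have P: "PP k r (2*s-1) = U_half (2*r-2) * U_half (2*k+1-2*s)" .
      have "Dc k r (2*s-1) = GG k r * PP k r (2*s-1)" unfolding Dc_def using 1 by simp
      then show ?thesis unfolding C1 P G div using 1 sgn[symmetric]
        by (simp add: algebra_simps)
    next
      case 2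
      have c: "2*s-1 \<le> 2*r-1" using 2 by simp
      have i: "2*s-1 = Suc (2*r-2)" "2*k+1-(2*r-1) = Suc (2*k+1-2*r)" using 2 assms by auto
      have "PP k r (2*s-1) = W (2*s-1) * W (2*k+1-(2*r-1))" unfolding PP_def using c by simp
      also have "\<dots> = U_half (2*r-2) * U_half (2*k+1-2*r)" unfolding i by simp
      finally have P: "PP k r (2*s-1) = U_half (2*r-2) * U_half (2*k+1-2*r)" .
      have dc: "Dc k r (2*s-1) = GG k r * PP k r (2*s-1) - (-1)^(r+1)" unfolding Dc_def using 2 by simp
      have e: "((-1)::real fps)^r * (-1)^(r+1) = -1"
        by (simp add: power_add mult.assoc[symmetric] power_mult_distrib[symmetric])
      have "cc k r (2*s-1) = ((-1)^r * (-1)^(r+1)) * (fps_X * I * (U_half (2*r-2) * U_half (2*k+1-2*r)))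
           - ((-1)::real fps)^r * (-1)^(r+1)"
        unfolding C1 dc P G using 2 by (simp add: algebra_simps)
      also have "\<dots> = 1 - fps_X * U_half (2*r - 2) * U_half (2*k + 1 - 2*r) * I"
        unfolding e by (simp add: algebra_simps)
      finally show ?thesis using 2 by (simp add: div)
    next
      case 3
      have c: "2*s-1 \<le> 2*r-1" using 3 by simp
      have i: "2*s-1 = Suc (2*s-2)" "2*k+1-(2*r-1) = Suc (2*k+1-2*r)" using 3 assms by auto
      have "PP k r (2*s-1) = W (2*s-1) * W (2*k+1-(2*r-1))" unfolding PP_def using c by simp
      also have "\<dots> = U_half (2*s-2) * U_half (2*k+1-2*r)" unfolding i by simp
      finally have P: "PP k r (2*s-1) = U_half (2*s-2) * U_half (2*k+1-2*r)" .
      have "Dc k r (2*s-1) = GG k r * PP k r (2*s-1)" unfolding Dc_def using 3 by simp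
      then show ?thesis unfolding C1 P G div using 3 sgn[symmetric]
        by (simp add: algebra_simps)
    qed
  qed
  have part2: "cc k r (2*s) =
           (if r \<le> s then
              (-1) ^ (r + s + 1) * (fps_X * U_half (2*r - 2) * U_half (2*k - 2*s) / U_half (2*k))
            else
              (-1) ^ (r + s + 1) * (fps_X * U_half (2*s - 1) * U_half (2*k - 2*r + 1) / U_half (2*k)))"
  proof (cases "r \<le> s")
    case True
    have c: "\<not> (2*s \<le> 2*r-1)" using True assms(1) by arith
    have i: "2*r-1 = Suc (2*r-2)" "2*k+1-2*s = Suc (2*k-2*s)" using True assms by auto
    have "PP k r (2*s) = W (2*r-1) * W (2*k+1-2*s)" unfolding PP_def using c by simp
    also have "\<dots> = U_half (2*r-2) * U_half (2*k-2*s)" unfolding i by simp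
    finally have P: "PP k r (2*s) = U_half (2*r-2) * U_half (2*k-2*s)" .
    have ne: "2*s \<noteq> 2*r-1" using assms(1) by presburger
    have "Dc k r (2*s) = GG k r * PP k r (2*s)" unfolding Dc_def using ne by simp
    then show ?thesis unfolding C2 P G div using True sgn[symmetric]
      by (simp add: algebra_simps)
  next
    case False
    have c: "2*s \<le> 2*r-1" using False by simp
    have i: "2*s = Suc (2*s-1)" "2*k+1-(2*r-1) = Suc (2*k-2*r+1)" using False assms by auto
    have "PP k r (2*s) = W (2*s) * W (2*k+1-(2*r-1))" unfolding PP_def using c by simp
    also have "\<dots> = U_half (2*s-1) * U_half (2*k-2*r+1)" by (subst i(1), subst i(2)) simp
    finally have P: "PP k r (2*s) = U_half (2*s-1) * U_half (2*k-2*r+1)" .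
    have ne: "2*s \<noteq> 2*r-1" using assms(1) by presburger
    have "Dc k r (2*s) = GG k r * PP k r (2*s)" unfolding Dc_def using ne by simp
    then show ?thesis unfolding C2 P G div using False sgn[symmetric]
      by (simp add: algebra_simps)
  qed
  show ?thesis unfolding L1 L2 using part1 part2 by simp
qed

end
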